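(* For every tree $\Gamma$ as described, there exist coefficients $\lambda_x>0$ and $\beta_x\in\mathbb R$ ($x\in\Gamma$) such that the associated Jacobi matrix $J$ with domain $\mathcal F(\Gamma)$ is not essentially selfadjoint in $\ell^2(\Gamma)$.
   Context: Let $\Gamma$ be an infinite connected tree whose vertices are arranged in levels $\ell(x)\in\{0,1,2,\dots\}$: every vertex $x$ is adjacent to exactly one vertex $x'$ with $\ell(x')=\ell(x)+1$; for $\ell(x)\ge 1$ the set $N_x=\{y:\ y'=x\}$ of neighbours of $x$ on level $\ell(x)-1$ is finite and nonempty; $N_x=\emptyset$ if $\ell(x)=0$; there are no other edges. Given $\lambda_x>0$, $\beta_x\in\mathbb R$, the Jacobi matrix $J$ acts on functions $v:\Gamma\to\mathbb C$ by $(Jv)(x)=\lambda_x v(x')+\beta_x v(x)+\sum_{y\in N_x}\lambda_y v(y)$. $\mathcal F(\Gamma)$ denotes the finitely supported functions; $J$ with domain $\mathcal F(\Gamma)$ is symmetric in $\ell^2(\Gamma)$. *)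

theory Defs
  imports "HOL-Analysis.Analysis"
begin

text \<open>A levelled tree: the vertex set is the type 'a, lev is the level function,
  par x is the unique neighbour x' of x on the next level, N x = par -` {x}.
  The only edges are {x, par x}.\<close>

definition level_tree :: "('a \<Rightarrow> nat) \<Rightarrow> ('a \<Rightarrow> 'a) \<Rightarrow> bool" where
  "level_tree lev par \<longleftrightarrow>
     (\<forall>x. lev (par x) = lev x + 1) \<and>
     (\<forall>x. lev x \<ge> 1 \<longrightarrow> finite {y. par y = x} \<and> {y. par y = x} \<noteq> {}) \<and>
     (\<forall>x. lev x = 0 \<longrightarrow> {y. par y = x} = {}) \<and>
     (\<forall>x y. \<exists>n m. (par ^^ n) x = (par ^^ m) y) \<and>
     infinite (UNIV :: 'a set)"

definition jacobi :: "('a \<Rightarrow> 'a) \<Rightarrow> ('a \<Rightarrow> real) \<Rightarrow> ('a \<Rightarrow> real)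
                     \<Rightarrow> ('a \<Rightarrow> complex) \<Rightarrow> 'a \<Rightarrow> complex" where
  "jacobi par lam beta v x =
     complex_of_real (lam x) * v (par x) + complex_of_real (beta x) * v x
     + (\<Sum>y\<in>{y. par y = x}. complex_of_real (lam y) * v y)"

definition l2 :: "('a \<Rightarrow> complex) set" where
  "l2 = {v. (\<lambda>x. (cmod (v x))\<^sup>2) summable_on UNIV}"

definition l2_inner :: "('a \<Rightarrow> complex) \<Rightarrow> ('a \<Rightarrow> complex) \<Rightarrow> complex" where
  "l2_inner v w = (\<Sum>\<^sub>\<infinity>x. v x * cnj (w x))"

definition l2_norm :: "('a \<Rightarrow> complex) \<Rightarrow> real" where
  "l2_norm v = sqrt (\<Sum>\<^sub>\<infinity>x. (cmod (v x))\<^sup>2)"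

definition fin_supp :: "('a \<Rightarrow> complex) set" where
  "fin_supp = {v. finite {x. v x \<noteq> 0}}"

text \<open>Operators are represented by their graphs (subsets of l2 x l2).\<close>

definition graph_closure :: "(('a \<Rightarrow> complex) \<times> ('a \<Rightarrow> complex)) set
                             \<Rightarrow> (('a \<Rightarrow> complex) \<times> ('a \<Rightarrow> complex)) set" where
  "graph_closure G = {(u, w). u \<in> l2 \<and> w \<in> l2 \<and>
      (\<exists>s. (\<forall>n. s n \<in> G) \<and> (\<lambda>n. l2_norm (fst (s n) - u)) \<longlonglongrightarrow> 0
                         \<and> (\<lambda>n. l2_norm (snd (s n) - w)) \<longlonglongrightarrow> 0)}"

definition graph_adjoint :: "(('a \<Rightarrow> complex) \<times> ('a \<Rightarrow> complex)) set
                             \<Rightarrow> (('a \<Rightarrow> complex) \<times> ('a \<Rightarrow> complex)) set" where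
  "graph_adjoint G = {(v, w). v \<in> l2 \<and> w \<in> l2 \<and>
      (\<forall>(u, z)\<in>G. l2_inner z v = l2_inner u w)}"

definition ess_selfadjoint :: "(('a \<Rightarrow> complex) \<Rightarrow> ('a \<Rightarrow> complex)) \<Rightarrow> ('a \<Rightarrow> complex) set \<Rightarrow> bool" where
  "ess_selfadjoint T D \<longleftrightarrow>
     (let G = graph_closure {(u, T u) | u. u \<in> D} in graph_adjoint G = G)"

end

theory Submission
  imports Defs
begin

lemma sq_sum_le: "((x::real) + y)\<^sup>2 \<le> 2 * x\<^sup>2 + 2 * y\<^sup>2"
proof -
  have "0 \<le> (x - y)\<^sup>2" by simp
  thus ?thesis by (simp add: power2_eq_square algebra_simps)
qed

lemma prod_le_sq: "0 \<le> x \<Longrightarrow> 0 \<le> y \<Longrightarrow> (x::real) * y \<le> x\<^sup>2 + y\<^sup>2"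
proof -
  assume "0 \<le> x" "0 \<le> y"
  hence "0 \<le> x * y" by simp
  moreover have "0 \<le> (x - y)\<^sup>2" by simp
  ultimately show ?thesis by (simp add: power2_eq_square algebra_simps)
qed

lemma l2_iff: "v \<in> l2 \<longleftrightarrow> (\<lambda>x. (cmod (v x))\<^sup>2) summable_on UNIV"
  by (simp add: l2_def)

lemma l2_comb:
  assumes "a \<in> l2" "b \<in> l2" "\<And>x. cmod (c x) \<le> cmod (a x) + cmod (b x)"
  shows "c \<in> l2"
proof -
  have s: "(\<lambda>x. 2 * (cmod (a x))\<^sup>2 + 2 * (cmod (b x))\<^sup>2) summable_on UNIV"
    using assms by (intro summable_on_add summable_on_cmult_right) (auto simp: l2_iff)
  show ?thesis unfolding l2_iff
  proof (rule summable_on_comparison_test[OF s])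
    fix x
    have "(cmod (c x))\<^sup>2 \<le> (cmod (a x) + cmod (b x))\<^sup>2"
      using assms(3)[of x] by (intro power_mono) auto
    also have "\<dots> \<le> 2 * (cmod (a x))\<^sup>2 + 2 * (cmod (b x))\<^sup>2"
      by (rule sq_sum_le)
    finally show "(cmod (c x))\<^sup>2 \<le> 2 * (cmod (a x))\<^sup>2 + 2 * (cmod (b x))\<^sup>2" .
  qed auto
qed

lemma l2_diff: "a \<in> l2 \<Longrightarrow> b \<in> l2 \<Longrightarrow> (a - b) \<in> l2"
  by (rule l2_comb[of a b]) (auto simp: norm_triangle_ineq4)

lemma l2_add: "a \<in> l2 \<Longrightarrow> b \<in> l2 \<Longrightarrow> (\<lambda>x. a x + b x) \<in> l2"
  by (rule l2_comb[of a b]) (auto simp: norm_triangle_ineq)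

lemma l2_finsupp: "v \<in> fin_supp \<Longrightarrow> v \<in> l2"
  unfolding l2_iff fin_supp_def
  by (subst summable_on_cong_neutral[where T="{x. v x \<noteq> 0}" and g="\<lambda>x. (cmod (v x))\<^sup>2"]) auto

lemma l2_prod_abs:
  assumes "a \<in> l2" "b \<in> l2"
  shows "(\<lambda>x. norm (a x * cnj (b x))) summable_on UNIV"
proof -
  have s: "(\<lambda>x. (cmod (a x))\<^sup>2 + (cmod (b x))\<^sup>2) summable_on UNIV"
    using assms by (intro summable_on_add) (auto simp: l2_iff)
  show ?thesis
  proof (rule summable_on_comparison_test[OF s])
    fix x
    show "norm (a x * cnj (b x)) \<le> (cmod (a x))\<^sup>2 + (cmod (b x))\<^sup>2"
      by (simp add: norm_mult prod_le_sq)
  qed auto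
qed

lemma l2_prod_summable:
  assumes "a \<in> l2" "b \<in> l2"
  shows "(\<lambda>x. a x * cnj (b x)) summable_on UNIV"
  by (rule Infinite_Sum.abs_summable_summable[OF l2_prod_abs[OF assms]])

lemma cs_real_aux:
  fixes N A B :: real
  assumes A: "A \<ge> 0" and B: "B \<ge> 0" and H: "\<And>t. t > 0 \<Longrightarrow> 2 * N \<le> t * A + (1/t) * B"
  shows "N \<le> sqrt A * sqrt B"
proof (cases "A > 0 \<and> B > 0")
  case True
  define t where "t = sqrt B / sqrt A"
  have tp: "t > 0" using True by (simp add: t_def)
  have sA: "sqrt A * sqrt A = A" "sqrt B * sqrt B = B" using A B by simp_all
  have sAp: "sqrt A > 0" using True by simp
  have "t * A = sqrt A * sqrt B" unfolding t_def
    by (subst sA(1)[symmetric]) (use sAp in \<open>simp add: field_simps\<close>)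
  moreover have "(1/t) * B = sqrt A * sqrt B" unfolding t_def
    by (subst sA(2)[symmetric]) (use sAp True in \<open>simp add: field_simps\<close>)
  ultimately show ?thesis using H[OF tp] by simp
next
  case False
  hence "A = 0 \<or> B = 0" using A B by auto
  show ?thesis
  proof (rule ccontr)
    assume "\<not> N \<le> sqrt A * sqrt B"
    hence Np: "N > 0" using \<open>A = 0 \<or> B = 0\<close> by auto
    show False
    proof (cases "A = 0")
      case True
      define t where "t = (B + 1) / N"
      have tp: "t > 0" using Np B by (simp add: t_def)
      have "(1/t) * B = B * N / (B + 1)" using Np B by (simp add: t_def)
      also have "\<dots> < N" using Np B by (simp add: divide_less_eq)
      finally show False using H[OF tp] True Np by simp
    next
      case False
      hence B0: "B = 0" using \<open>A = 0 \<or> B = 0\<close> by auto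
      define t where "t = N / (A + 1)"
      have tp: "t > 0" using Np A by (simp add: t_def)
      have "t * A = N * A / (A + 1)" by (simp add: t_def)
      also have "\<dots> < N" using Np A by (simp add: divide_less_eq)
      finally show False using H[OF tp] B0 Np by simp
    qed
  qed
qed

lemma amgm_t:
  fixes a b t :: real assumes "t > 0"
  shows "2 * (a * b) \<le> t * a\<^sup>2 + (1/t) * b\<^sup>2"
proof -
  have "0 \<le> (t * a - b)\<^sup>2 / t" using assms by simp
  also have "(t * a - b)\<^sup>2 / t = t * a\<^sup>2 + (1/t) * b\<^sup>2 - 2 * (a * b)"
    using assms by (simp add: power2_eq_square field_simps)
  finally show ?thesis by simp
qed

lemma l2_cs:
  assumes a: "a \<in> l2" and b: "b \<in> l2"
  shows "cmod (l2_inner a b) \<le> l2_norm a * l2_norm b"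
proof -
  define A where "A = (\<Sum>\<^sub>\<infinity>x. (cmod (a x))\<^sup>2)"
  define B where "B = (\<Sum>\<^sub>\<infinity>x. (cmod (b x))\<^sup>2)"
  have sa: "(\<lambda>x. (cmod (a x))\<^sup>2) summable_on UNIV" and sb: "(\<lambda>x. (cmod (b x))\<^sup>2) summable_on UNIV"
    using a b by (auto simp: l2_iff)
  have sn: "(\<lambda>x. norm (a x * cnj (b x))) summable_on UNIV" using l2_prod_abs[OF a b] .
  have A0: "A \<ge> 0" unfolding A_def by (rule infsum_nonneg) simp
  have B0: "B \<ge> 0" unfolding B_def by (rule infsum_nonneg) simp
  define N where "N = cmod (l2_inner a b)"
  have N1: "N \<le> (\<Sum>\<^sub>\<infinity>x. norm (a x * cnj (b x)))"
    unfolding N_def l2_inner_def by (rule norm_infsum_bound[OF sn])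
  have "N \<le> sqrt A * sqrt B"
  proof (rule cs_real_aux[OF A0 B0])
    fix t :: real assume tp: "t > 0"
    have "2 * N \<le> 2 * (\<Sum>\<^sub>\<infinity>x. norm (a x * cnj (b x)))" using N1 by simp
    also have "\<dots> = (\<Sum>\<^sub>\<infinity>x. 2 * norm (a x * cnj (b x)))"
      by (rule infsum_cmult_right[symmetric]) (use sn in simp)
    also have "\<dots> \<le> (\<Sum>\<^sub>\<infinity>x. t * (cmod (a x))\<^sup>2 + (1/t) * (cmod (b x))\<^sup>2)"
    proof (rule infsum_mono)
      show "(\<lambda>x. 2 * norm (a x * cnj (b x))) summable_on UNIV" by (rule summable_on_cmult_right[OF sn])
      show "(\<lambda>x. t * (cmod (a x))\<^sup>2 + (1/t) * (cmod (b x))\<^sup>2) summable_on UNIV"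
        by (intro summable_on_add summable_on_cmult_right sa sb)
      fix x show "2 * norm (a x * cnj (b x)) \<le> t * (cmod (a x))\<^sup>2 + (1/t) * (cmod (b x))\<^sup>2"
        using amgm_t[OF tp, of "cmod (a x)" "cmod (b x)"] by (simp add: norm_mult)
    qed
    also have "\<dots> = (\<Sum>\<^sub>\<infinity>x. t * (cmod (a x))\<^sup>2) + (\<Sum>\<^sub>\<infinity>x. (1/t) * (cmod (b x))\<^sup>2)"
      by (rule infsum_add) (intro summable_on_cmult_right sa sb)+
    also have "\<dots> = t * A + (1/t) * B"
      unfolding A_def B_def by (simp only: infsum_cmult_right')
    finally show "2 * N \<le> t * A + (1/t) * B" .
  qed
  thus ?thesis unfolding N_def l2_norm_def A_def B_def .
qed

lemma l2_inner_diff: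
  assumes "a \<in> l2" "c \<in> l2" "b \<in> l2"
  shows "l2_inner a b - l2_inner c b = l2_inner (a - c) b"
proof -
  have s1: "(\<lambda>x. a x * cnj (b x)) summable_on UNIV" by (rule l2_prod_summable[OF assms(1,3)])
  have s2: "(\<lambda>x. - (c x * cnj (b x))) summable_on UNIV"
    unfolding summable_on_uminus by (rule l2_prod_summable[OF assms(2,3)])
  have "l2_inner (a - c) b = (\<Sum>\<^sub>\<infinity>x. a x * cnj (b x) + - (c x * cnj (b x)))"
    unfolding l2_inner_def by (simp add: algebra_simps)
  also have "\<dots> = l2_inner a b - l2_inner c b"
    unfolding l2_inner_def by (subst infsum_add[OF s1 s2]) (simp add: infsum_uminus)
  finally show ?thesis by simp
qed

lemma l2_inner_cont:
  assumes a: "a \<in> l2" and b: "b \<in> l2" and s: "\<And>n. s n \<in> l2"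
    and lim: "(\<lambda>n. l2_norm (s n - a)) \<longlonglongrightarrow> 0"
  shows "(\<lambda>n. l2_inner (s n) b) \<longlonglongrightarrow> l2_inner a b"
proof (rule LIM_zero_cancel)
  have "(\<lambda>n. l2_norm (s n - a) * l2_norm b) \<longlonglongrightarrow> 0 * l2_norm b"
    by (intro tendsto_mult lim tendsto_const)
  hence L: "(\<lambda>n. l2_norm (s n - a) * l2_norm b) \<longlonglongrightarrow> 0" by simp
  show "(\<lambda>n. l2_inner (s n) b - l2_inner a b) \<longlonglongrightarrow> 0"
  proof (rule Lim_null_comparison[OF _ L])
    show "\<forall>\<^sub>F n in sequentially. norm (l2_inner (s n) b - l2_inner a b) \<le> l2_norm (s n - a) * l2_norm b"
      using l2_inner_diff[OF s a b] l2_cs[OF l2_diff[OF s a] b] by (intro always_eventually) simp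
  qed
qed


definition Kw :: "('a \<Rightarrow> 'a) \<Rightarrow> ('a \<Rightarrow> real) \<Rightarrow> 'a \<Rightarrow> 'a \<Rightarrow> complex" where
  "Kw par lam x y = complex_of_real ((if par x = y then lam x else 0) + (if par y = x then lam y else 0))"

lemma Kw_sym: "Kw par lam x y = Kw par lam y x"
  unfolding Kw_def by (simp add: add.commute)

lemma Kw_cnj[simp]: "cnj (Kw par lam x y) = Kw par lam x y"
  unfolding Kw_def by simp

lemma jacobi_edge:
  assumes fin: "finite {y. par y = x}" and E: "finite E"
    and h1: "par x \<in> E \<or> f (par x) = 0" and h2: "\<And>y. par y = x \<Longrightarrow> y \<in> E \<or> f y = 0"
  shows "jacobi par lam beta f x = complex_of_real (beta x) * f x + (\<Sum>y\<in>E. Kw par lam x y * f y)"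
proof -
  have "(\<Sum>y\<in>E. Kw par lam x y * f y) =
        (\<Sum>y\<in>E. if par x = y then complex_of_real (lam x) * f y else 0) +
        (\<Sum>y\<in>E. if par y = x then complex_of_real (lam y) * f y else 0)"
    unfolding Kw_def sum.distrib[symmetric] by (rule sum.cong) (auto simp: distrib_right)
  also have "(\<Sum>y\<in>E. if par x = y then complex_of_real (lam x) * f y else 0) = complex_of_real (lam x) * f (par x)"
    using E h1 by (auto simp: sum.delta')
  also have "(\<Sum>y\<in>E. if par y = x then complex_of_real (lam y) * f y else 0)
           = (\<Sum>y\<in>{y\<in>E. par y = x}. complex_of_real (lam y) * f y)"
    using E by (simp add: sum.inter_filter)
  also have "\<dots> = (\<Sum>y\<in>{y. par y = x}. complex_of_real (lam y) * f y)"
    by (rule sum.mono_neutral_left) (use fin h2 in auto)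
  finally show ?thesis unfolding jacobi_def by (simp add: algebra_simps)
qed

lemma green:
  assumes finch: "\<And>x. finite {y. par y = x}" and u: "u \<in> fin_supp"
  shows "l2_inner (jacobi par lam beta u) v = l2_inner u (jacobi par lam beta v)"
proof -
  define F where "F = {x. u x \<noteq> 0}"
  have fF: "finite F" using u by (simp add: F_def fin_supp_def)
  define E where "E = F \<union> par ` F \<union> {y. par y \<in> F}"
  have "{y. par y \<in> F} = (\<Union>x\<in>F. {y. par y = x})" by auto
  hence "finite {y. par y \<in> F}" using fF finch by auto
  hence fE: "finite E" using fF by (simp add: E_def)
  have FE: "F \<subseteq> E" by (auto simp: E_def)
  have uz: "\<And>x. x \<notin> F \<Longrightarrow> u x = 0" by (simp add: F_def)
  have Ju0: "jacobi par lam beta u x = 0" if "x \<notin> E" for x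
  proof -
    have "x \<notin> F" "par x \<notin> F" "\<And>y. par y = x \<Longrightarrow> y \<notin> F" using that by (auto simp: E_def)
    thus ?thesis unfolding jacobi_def using uz by simp
  qed
  have L: "l2_inner (jacobi par lam beta u) v = (\<Sum>x\<in>E. jacobi par lam beta u x * cnj (v x))"
    unfolding l2_inner_def
    by (subst infsum_cong_neutral[where T=E and g="\<lambda>x. jacobi par lam beta u x * cnj (v x)"])
       (use Ju0 fE in auto)
  have R: "l2_inner u (jacobi par lam beta v) = (\<Sum>x\<in>E. u x * cnj (jacobi par lam beta v x))"
    unfolding l2_inner_def
    by (subst infsum_cong_neutral[where T=E and g="\<lambda>x. u x * cnj (jacobi par lam beta v x)"])
       (use uz FE fE in auto)
  have Ju: "jacobi par lam beta u x = complex_of_real (beta x) * u x + (\<Sum>y\<in>E. Kw par lam x y * u y)"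
    if "x \<in> E" for x
    by (rule jacobi_edge[OF finch fE]) (use uz FE in \<open>auto\<close>)
  have Jv: "u x * cnj (jacobi par lam beta v x) =
            u x * cnj (complex_of_real (beta x) * v x + (\<Sum>y\<in>E. Kw par lam x y * v y))" for x
  proof (cases "x \<in> F")
    case True
    have "jacobi par lam beta v x = complex_of_real (beta x) * v x + (\<Sum>y\<in>E. Kw par lam x y * v y)"
      by (rule jacobi_edge[OF finch fE]) (use True in \<open>auto simp: E_def\<close>)
    thus ?thesis by simp
  next
    case False thus ?thesis using uz by simp
  qed
  have "(\<Sum>x\<in>E. jacobi par lam beta u x * cnj (v x)) =
        (\<Sum>x\<in>E. complex_of_real (beta x) * u x * cnj (v x)) + (\<Sum>x\<in>E. \<Sum>y\<in>E. Kw par lam x y * u y * cnj (v x))"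
    unfolding sum.distrib[symmetric]
    by (rule sum.cong[OF refl]) (simp add: Ju distrib_right sum_distrib_right)
  also have "(\<Sum>x\<in>E. \<Sum>y\<in>E. Kw par lam x y * u y * cnj (v x)) = (\<Sum>y\<in>E. \<Sum>x\<in>E. Kw par lam x y * u y * cnj (v x))"
    by (rule sum.swap)
  also have "\<dots> = (\<Sum>x\<in>E. \<Sum>y\<in>E. u x * (Kw par lam x y * cnj (v y)))"
    by (simp add: Kw_sym mult_ac)
  also have "(\<Sum>x\<in>E. complex_of_real (beta x) * u x * cnj (v x)) + (\<Sum>x\<in>E. \<Sum>y\<in>E. u x * (Kw par lam x y * cnj (v y)))
      = (\<Sum>x\<in>E. u x * cnj (complex_of_real (beta x) * v x + (\<Sum>y\<in>E. Kw par lam x y * v y)))"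
    unfolding sum.distrib[symmetric]
    by (rule sum.cong[OF refl]) (simp add: distrib_left sum_distrib_left mult_ac)
  finally show ?thesis unfolding L R Jv .
qed


lemma jacobi_fin_supp:
  assumes finch: "\<And>x. finite {y. par y = x}" and u: "u \<in> fin_supp"
  shows "jacobi par lam beta u \<in> fin_supp"
proof -
  define F where "F = {x. u x \<noteq> 0}"
  have fF: "finite F" using u by (simp add: F_def fin_supp_def)
  define E where "E = F \<union> par ` F \<union> {y. par y \<in> F}"
  have "{y. par y \<in> F} = (\<Union>x\<in>F. {y. par y = x})" by auto
  hence "finite {y. par y \<in> F}" using fF finch by auto
  hence fE: "finite E" using fF by (simp add: E_def)
  have uz: "\<And>x. x \<notin> F \<Longrightarrow> u x = 0" by (simp add: F_def)
  have Ju0: "jacobi par lam beta u x = 0" if "x \<notin> E" for x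
  proof -
    have "x \<notin> F" "par x \<notin> F" "\<And>y. par y = x \<Longrightarrow> y \<notin> F" using that by (auto simp: E_def)
    thus ?thesis unfolding jacobi_def using uz by simp
  qed
  have "{x. jacobi par lam beta u x \<noteq> 0} \<subseteq> E" using Ju0 by blast
  thus ?thesis unfolding fin_supp_def using fE finite_subset by blast
qed

lemma adj_mem:
  assumes finch: "\<And>x. finite {y. par y = x}" and v: "v \<in> l2" and Jv: "jacobi par lam beta v \<in> l2"
  shows "(v, jacobi par lam beta v) \<in> graph_adjoint (graph_closure {(u, jacobi par lam beta u) | u. u \<in> fin_supp})"
  unfolding graph_adjoint_def
proof (clarsimp simp: v Jv)
  fix u z assume "(u, z) \<in> graph_closure {(u, jacobi par lam beta u) |u. u \<in> fin_supp}"
  then obtain s where u: "u \<in> l2" and z: "z \<in> l2"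
    and sG: "\<And>n. s n \<in> {(u, jacobi par lam beta u) |u. u \<in> fin_supp}"
    and l1: "(\<lambda>n. l2_norm (fst (s n) - u)) \<longlonglongrightarrow> 0" and l2': "(\<lambda>n. l2_norm (snd (s n) - z)) \<longlonglongrightarrow> 0"
    unfolding graph_closure_def by blast
  have sf: "fst (s n) \<in> fin_supp" and ss: "snd (s n) = jacobi par lam beta (fst (s n))" for n
    using sG[of n] by auto
  have sl1: "fst (s n) \<in> l2" for n using sf l2_finsupp by blast
  have sl2: "snd (s n) \<in> l2" for n using ss jacobi_fin_supp[OF finch sf] l2_finsupp by metis
  have A: "(\<lambda>n. l2_inner (snd (s n)) v) \<longlonglongrightarrow> l2_inner z v"
    by (rule l2_inner_cont[OF z v sl2 l2'])
  have B: "(\<lambda>n. l2_inner (fst (s n)) (jacobi par lam beta v)) \<longlonglongrightarrow> l2_inner u (jacobi par lam beta v)"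
    by (rule l2_inner_cont[OF u Jv sl1 l1])
  have eq: "l2_inner (snd (s n)) v = l2_inner (fst (s n)) (jacobi par lam beta v)" for n
    unfolding ss by (rule green[OF finch sf])
  show "l2_inner z v = l2_inner u (jacobi par lam beta v)"
    using A B unfolding eq by (rule LIMSEQ_unique)
qed


locale ray_setup =
  fixes lev :: "'a \<Rightarrow> nat" and par :: "'a \<Rightarrow> 'a" and x0 :: 'a
  assumes levp: "\<And>x. lev (par x) = lev x + 1" and finch: "\<And>x. finite {y. par y = x}"
begin

definition ray :: "nat \<Rightarrow> 'a" where "ray n = (par ^^ n) x0"
definition R :: "'a set" where "R = range ray"
definition idx :: "'a \<Rightarrow> nat" where "idx x = lev x - lev x0"
definition lam :: "'a \<Rightarrow> real" where
  "lam x = (if x \<in> R then 2 ^ idx x else 1 / real (card {y. par y = par x}))"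
definition V :: "(nat \<Rightarrow> real) \<Rightarrow> 'a \<Rightarrow> complex" where
  "V p x = (if x \<in> R then complex_of_real (p (idx x)) else 0)"
definition Lk :: "(nat \<Rightarrow> real) \<Rightarrow> 'a \<Rightarrow> complex" where
  "Lk p x = (if x \<notin> R \<and> par x \<in> R then complex_of_real (lam x * p (idx (par x))) else 0)"
definition rr :: "(nat \<Rightarrow> real) \<Rightarrow> nat \<Rightarrow> real" where
  "rr p n = 2 ^ n * p (Suc n) + (if n > 0 then 2 ^ (n - 1) * p (n - 1) else 0)"

lemma ray_Suc: "ray (Suc n) = par (ray n)"
  by (simp add: ray_def)

lemma ray_0: "ray 0 = x0" by (simp add: ray_def)

lemma lev_ray: "lev (ray n) = lev x0 + n"
  by (induction n) (simp_all add: ray_Suc levp ray_0)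

lemma idx_ray[simp]: "idx (ray n) = n"
  by (simp add: idx_def lev_ray)

lemma inj_ray: "inj ray"
  by (rule injI) (metis idx_ray)

lemma ray_eq_iff[simp]: "ray m = ray n \<longleftrightarrow> m = n"
  using inj_ray by (auto dest: injD)

lemma in_R: "x \<in> R \<longleftrightarrow> (\<exists>n. x = ray n)"
  by (auto simp: R_def)

lemma ray_in_R[simp]: "ray n \<in> R" by (simp add: R_def)

lemma par_R: "x \<in> R \<Longrightarrow> par x \<in> R"
  by (auto simp: in_R ray_Suc[symmetric])

lemma child_notR: "x \<notin> R \<Longrightarrow> par y = x \<Longrightarrow> y \<notin> R"
  using par_R by blast

lemma lam_pos: "lam x > 0"
proof (cases "x \<in> R")
  case False
  have "x \<in> {y. par y = par x}" by simp
  hence "card {y. par y = par x} > 0" using finch[of "par x"] by (auto simp: card_gt_0_iff)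
  thus ?thesis using False by (simp add: lam_def)
qed (simp add: lam_def)

lemma J_V:
  "jacobi par lam (\<lambda>_. 0) (V p) x = (if x \<in> R then complex_of_real (rr p (idx x)) else Lk p x)"
proof (cases "x \<in> R")
  case True
  then obtain n where xn: "x = ray n" by (auto simp: in_R)
  have ch: "complex_of_real (lam y) * V p y =
            (if n > 0 \<and> y = ray (n - 1) then complex_of_real (2 ^ (n - 1) * p (n - 1)) else 0)"
    if "par y = ray n" for y
  proof (cases "y \<in> R")
    case True
    then obtain m where ym: "y = ray m" by (auto simp: in_R)
    have "ray (Suc m) = ray n" using that ym ray_Suc by simp
    hence "n = Suc m" by simp
    thus ?thesis using ym by (simp add: lam_def V_def)
  next
    case False
    thus ?thesis by (auto simp: V_def)
  qed
  have S: "(\<Sum>y\<in>{y. par y = ray n}. complex_of_real (lam y) * V p y) =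
           (if n > 0 then complex_of_real (2 ^ (n - 1) * p (n - 1)) else 0)"
  proof (cases n)
    case 0
    thus ?thesis using ch by (simp add: sum.neutral)
  next
    case (Suc m)
    have "(\<Sum>y\<in>{y. par y = ray n}. complex_of_real (lam y) * V p y) =
          (\<Sum>y\<in>{y. par y = ray n}. if y = ray m then complex_of_real (2 ^ m * p m) else 0)"
      by (rule sum.cong[OF refl]) (use ch Suc in simp)
    also have "\<dots> = complex_of_real (2 ^ m * p m)"
      using finch[of "ray n"] Suc by (simp add: sum.delta ray_Suc)
    finally show ?thesis using Suc by simp
  qed
  show ?thesis
    unfolding jacobi_def xn S
    by (simp add: lam_def V_def ray_Suc[symmetric] rr_def par_R)
next
  case False
  have "(\<Sum>y\<in>{y. par y = x}. complex_of_real (lam y) * V p y) = 0"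
    by (rule sum.neutral) (use child_notR[OF False] in \<open>auto simp: V_def\<close>)
  thus ?thesis unfolding jacobi_def using False by (simp add: V_def Lk_def)
qed

lemma V_l2:
  assumes "summable (\<lambda>n. (p n)\<^sup>2)"
  shows "V p \<in> l2"
proof -
  have "(\<lambda>n. (p n)\<^sup>2) summable_on UNIV"
    using assms by (subst summable_on_UNIV_nonneg_real_iff) auto
  hence "((\<lambda>x. (cmod (V p x))\<^sup>2) \<circ> ray) summable_on UNIV"
    by (simp add: o_def V_def)
  hence "(\<lambda>x. (cmod (V p x))\<^sup>2) summable_on R"
    unfolding R_def by (subst summable_on_reindex) (use inj_ray in auto)
  thus ?thesis unfolding l2_iff
    by (subst summable_on_cong_neutral[where T=R and g="\<lambda>x. (cmod (V p x))\<^sup>2"]) (auto simp: V_def)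
qed

lemma Lk_inner_bound:
  assumes "S \<subseteq> {x. par x = y}"
  shows "(\<Sum>x\<in>S. (cmod (Lk p x))\<^sup>2) \<le> (cmod (V p y))\<^sup>2"
proof (cases "S = {}")
  case False
  define c where "c = card {x. par x = y}"
  define a where "a = (cmod (V p y))\<^sup>2"
  have fS: "finite S" using finite_subset[OF assms finch] .
  have cS: "card S \<le> c" unfolding c_def by (rule card_mono[OF finch assms])
  have c1: "c \<ge> 1" using cS False fS by (simp add: card_gt_0_iff Suc_le_eq) (use False fS card_gt_0_iff in fastforce)
  have a0: "a \<ge> 0" by (simp add: a_def)
  have t: "(cmod (Lk p x))\<^sup>2 \<le> a / (real c)\<^sup>2" if "x \<in> S" for x
  proof (cases "x \<notin> R \<and> y \<in> R")
    case True
    have px: "par x = y" using assms that by auto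
    have "lam x = 1 / real c" using True px by (simp add: lam_def c_def)
    hence "Lk p x = complex_of_real (p (idx y) / real c)" using True px by (simp add: Lk_def)
    hence "(cmod (Lk p x))\<^sup>2 = (p (idx y) / real c)\<^sup>2" by (simp only: norm_of_real power2_abs)
    also have "\<dots> = a / (real c)\<^sup>2" using True by (simp add: a_def V_def power_divide)
    finally show ?thesis by simp
  next
    case False
    have px: "par x = y" using assms that by auto
    hence "Lk p x = 0" using False by (auto simp: Lk_def)
    thus ?thesis using a0 by simp
  qed
  have "(\<Sum>x\<in>S. (cmod (Lk p x))\<^sup>2) \<le> real (card S) * (a / (real c)\<^sup>2)"
    using sum_bounded_above[of S "\<lambda>x. (cmod (Lk p x))\<^sup>2" "a / (real c)\<^sup>2"] t by simp
  also have "\<dots> \<le> real c * (a / (real c)\<^sup>2)"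
    using cS a0 by (intro mult_right_mono) auto
  also have "\<dots> = a / real c" using c1 by (simp add: power2_eq_square)
  also have "\<dots> \<le> a"
  proof -
    have "a * 1 \<le> a * real c" using c1 a0 by (intro mult_left_mono) auto
    thus ?thesis using c1 by (simp add: divide_le_eq)
  qed
  finally show ?thesis by (simp add: a_def)
qed simp

lemma Lk_l2:
  assumes V: "V p \<in> l2"
  shows "Lk p \<in> l2"
  unfolding l2_iff
proof (rule nonneg_bdd_above_summable_on)
  define B where "B = (\<Sum>\<^sub>\<infinity>x. (cmod (V p x))\<^sup>2)"
  have sV: "(\<lambda>x. (cmod (V p x))\<^sup>2) summable_on UNIV" using V by (simp add: l2_iff)
  show "bdd_above (sum (\<lambda>x. (cmod (Lk p x))\<^sup>2) ` {F. F \<subseteq> UNIV \<and> finite F})"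
  proof (rule bdd_aboveI2)
    fix F :: "'a set" assume "F \<in> {F. F \<subseteq> UNIV \<and> finite F}"
    hence fF: "finite F" by simp
    have "(\<Sum>x\<in>F. (cmod (Lk p x))\<^sup>2) = (\<Sum>y\<in>par ` F. \<Sum>x\<in>{x\<in>F. par x = y}. (cmod (Lk p x))\<^sup>2)"
      by (rule sum.image_gen[OF fF])
    also have "\<dots> \<le> (\<Sum>y\<in>par ` F. (cmod (V p y))\<^sup>2)"
      by (rule sum_mono) (rule Lk_inner_bound, auto)
    also have "\<dots> \<le> B" unfolding B_def
      by (rule finite_sum_le_infsum[OF sV]) (use fF in auto)
    finally show "(\<Sum>x\<in>F. (cmod (Lk p x))\<^sup>2) \<le> B" .
  qed
qed simp


lemma rrP: "rr (\<lambda>n. if even n then (-1/2::real) ^ (n div 2) else 0) n = 0"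
proof (cases "even n")
  case True
  thus ?thesis by (cases n) (auto simp: rr_def)
next
  case False
  then obtain k where n: "n = 2 * k + 1" by (auto elim: oddE)
  have "(2::real) ^ (2 * k + 1) * (-1/2) ^ (k + 1) = - (2 ^ (2 * k) * (-1/2) ^ k)"
    by (simp add: power_add)
  moreover have "Suc (2 * k + 1) div 2 = k + 1" by simp
  ultimately show ?thesis by (simp add: rr_def n)
qed

lemma rrQ: "rr (\<lambda>n. if odd n then (-1/2::real) ^ (n div 2) else 0) n = (if n = 0 then 1 else 0)"
proof (cases "odd n")
  case True
  thus ?thesis by (cases n) (auto simp: rr_def)
next
  case False
  show ?thesis
  proof (cases n)
    case 0 thus ?thesis by (simp add: rr_def)
  next
    case (Suc m)
    from False obtain j where nj: "n = 2 * j" by (auto elim: evenE)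
    with Suc have "j \<noteq> 0" by auto
    then obtain k where "j = Suc k" by (cases j) auto
    hence n: "n = 2 * k + 2" using nj by simp
    have "(2::real) ^ (2 * k + 2) * (-1/2) ^ (k + 1) = - (2 ^ (2 * k + 1) * (-1/2) ^ k)"
      by (simp add: power_add)
    moreover have "Suc (2 * k + 2) div 2 = k + 1" by simp
    moreover have "(2 * k + 1) div 2 = k" by simp
    ultimately show ?thesis by (simp add: rr_def n)
  qed
qed

end

lemma sq_half: "((-1/2::real) ^ k)\<^sup>2 = (1/4) ^ k"
proof -
  have "((-1/2::real) ^ k)\<^sup>2 = ((-1/2) * (-1/2)) ^ k" unfolding power2_eq_square power_mult_distrib ..
  thus ?thesis by simp
qed

lemma quarter_bound: "(1/4::real) ^ (n div 2) \<le> 2 * (1/2) ^ n"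
proof -
  have "(1/2::real) ^ (2 * (n div 2)) = ((1/2) ^ 2) ^ (n div 2)" by (rule power_mult)
  hence "(1/4::real) ^ (n div 2) = (1/2) ^ (2 * (n div 2))" by (simp add: power2_eq_square)
  also have "\<dots> = 2 * (1/2) ^ (2 * (n div 2) + 1)" by simp
  also have "\<dots> \<le> 2 * (1/2) ^ n"
    by (intro mult_left_mono power_decreasing) auto
  finally show ?thesis .
qed

lemma summable_PQ:
  fixes c :: "nat \<Rightarrow> bool"
  shows "summable (\<lambda>n. (if c n then (-1/2::real) ^ (n div 2) else 0)\<^sup>2)"
proof (rule summable_comparison_test')
  show "summable (\<lambda>n. 2 * (1/2::real) ^ n)" by (intro summable_mult summable_geometric) simp
  fix n :: nat
  show "norm ((if c n then (-1/2::real) ^ (n div 2) else 0)\<^sup>2) \<le> 2 * (1/2) ^ n"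
    using quarter_bound[of n] sq_half[of "n div 2"] by simp
qed

theorem theorem3:
  fixes lev :: "'a \<Rightarrow> nat" and par :: "'a \<Rightarrow> 'a"
  assumes "level_tree lev par"
  shows "\<exists>(lam :: 'a \<Rightarrow> real) (beta :: 'a \<Rightarrow> real).
           (\<forall>x. lam x > 0) \<and> \<not> ess_selfadjoint (jacobi par lam beta) fin_supp"
proof -
  have levp: "\<And>x. lev (par x) = lev x + 1" using assms by (simp add: level_tree_def)
  have finch: "finite {y. par y = x}" for x
  proof (cases "lev x \<ge> 1")
    case True thus ?thesis using assms by (simp add: level_tree_def)
  next
    case False
    hence "{y. par y = x} = {}" using assms by (simp add: level_tree_def)
    thus ?thesis by simp
  qed
  define x0 :: 'a where "x0 = undefined"
  interpret T: ray_setup lev par x0 by unfold_locales (simp_all add: levp finch)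
  define P :: "nat \<Rightarrow> real" where "P n = (if even n then (-1/2::real) ^ (n div 2) else 0)" for n
  define Q :: "nat \<Rightarrow> real" where "Q n = (if odd n then (-1/2::real) ^ (n div 2) else 0)" for n
  define J where "J = jacobi par T.lam (\<lambda>_. 0)"
  have rP: "T.rr P n = 0" for n unfolding P_def by (rule T.rrP)
  have rQ: "T.rr Q n = (if n = 0 then 1 else 0)" for n unfolding Q_def by (rule T.rrQ)
  have x0R: "x0 \<in> T.R" using T.ray_in_R[of 0] by (simp add: T.ray_0)
  have R0: "x \<in> T.R \<Longrightarrow> (T.idx x = 0 \<longleftrightarrow> x = x0)" for x
  proof -
    assume "x \<in> T.R"
    then obtain n where xn: "x = T.ray n" by (auto simp: T.in_R)
    show ?thesis using T.ray_eq_iff[of n 0] by (simp add: xn T.ray_0)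
  qed
  have JP: "J (T.V P) = T.Lk P"
    by (rule ext) (simp add: J_def T.J_V rP T.Lk_def)
  have JQ: "J (T.V Q) = (\<lambda>x. T.Lk Q x + (if x = x0 then 1 else 0))"
    by (rule ext) (auto simp: J_def T.J_V rQ T.Lk_def R0 x0R)
  have VP: "T.V P \<in> l2" unfolding P_def by (rule T.V_l2[OF summable_PQ])
  have VQ: "T.V Q \<in> l2" unfolding Q_def by (rule T.V_l2[OF summable_PQ])
  have JPl: "J (T.V P) \<in> l2" unfolding JP by (rule T.Lk_l2[OF VP])
  have ind: "(\<lambda>x. if x = x0 then 1 else 0 :: complex) \<in> l2"
    by (rule l2_finsupp) (simp add: fin_supp_def)
  have JQl: "J (T.V Q) \<in> l2" unfolding JQ by (rule l2_add[OF T.Lk_l2[OF VQ] ind])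
  define G where "G = graph_closure {(u, J u) | u. u \<in> fin_supp}"
  have aP: "(T.V P, J (T.V P)) \<in> graph_adjoint G"
    unfolding G_def J_def by (rule adj_mem[OF finch VP JPl[unfolded J_def]])
  have aQ: "(T.V Q, J (T.V Q)) \<in> graph_adjoint G"
    unfolding G_def J_def by (rule adj_mem[OF finch VQ JQl[unfolded J_def]])
  have lhs: "l2_inner (J (T.V P)) (T.V Q) = 0"
    unfolding l2_inner_def JP by (rule infsum_0) (simp add: T.Lk_def T.V_def)
  have pt: "T.V P x * cnj (J (T.V Q) x) = (if x = x0 then 1 else 0)" for x
  proof (cases "x \<in> T.R")
    case True
    show ?thesis
    proof (cases "x = x0")
      case True
      thus ?thesis using x0R R0[OF x0R] by (simp add: JQ T.V_def T.Lk_def P_def)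
    next
      case False
      hence "T.idx x \<noteq> 0" using R0[OF True] by simp
      thus ?thesis using True False by (simp add: JQ T.V_def T.Lk_def)
    qed
  next
    case False
    thus ?thesis using x0R by (auto simp: T.V_def)
  qed
  have rhs: "l2_inner (T.V P) (J (T.V Q)) = 1"
  proof -
    have "l2_inner (T.V P) (J (T.V Q)) = (\<Sum>\<^sub>\<infinity>x. (if x = x0 then 1 else 0 :: complex))"
      unfolding l2_inner_def pt ..
    also have "\<dots> = (\<Sum>\<^sub>\<infinity>x\<in>{x0}. (if x = x0 then 1 else 0 :: complex))"
      by (rule infsum_cong_neutral) auto
    also have "\<dots> = 1" by simp
    finally show ?thesis .
  qed
  have "\<not> ess_selfadjoint J fin_supp"
  proof
    assume "ess_selfadjoint J fin_supp"
    hence eq: "graph_adjoint G = G" unfolding ess_selfadjoint_def Let_def G_def .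
    have "(T.V P, J (T.V P)) \<in> G" using aP eq by simp
    with aQ have "l2_inner (J (T.V P)) (T.V Q) = l2_inner (T.V P) (J (T.V Q))"
      unfolding graph_adjoint_def by blast
    thus False using lhs rhs by simp
  qed
  thus ?thesis using T.lam_pos unfolding J_def by blast
qed

end
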